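(* Let $R$ be an integral domain, $p,q\in R$, $m\ge1$ an integer, and let $a=(a_n)_{n\ge0}$ be a linear recurrent sequence over $R$ with characteristic polynomial $(t^2-pt+q)^m$. Then $L^{(-1,p)}(a)$ is a linear recurrent sequence with the same characteristic polynomial $(t^2-pt+q)^m$.
   Context: A sequence $(a_n)$ is linear recurrent with characteristic polynomial $t^d-c_1t^{d-1}-\dots-c_d$ if $a_{n+d}=c_1a_{n+d-1}+\dots+c_da_n$ for all $n\ge0$. For $h,y\in R$, $L^{(h,y)}(a)$ is the sequence $b$ with $b_n=\sum_{i=0}^n\binom{n}{i}h^iy^{n-i}a_i$; thus $(L^{(-1,p)}(a))_n=\sum_{i=0}^n\binom{n}{i}(-1)^ip^{n-i}a_i$. *)

theory Defs
  imports "HOL-Computational_Algebra.Polynomial"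
begin

definition lin_rec_charpoly :: "'a::comm_ring_1 poly \<Rightarrow> (nat \<Rightarrow> 'a) \<Rightarrow> bool" where
  "lin_rec_charpoly P a \<longleftrightarrow> lead_coeff P = 1 \<and>
     (\<forall>n. a (n + degree P) =
          (\<Sum>i=1..degree P. (- coeff P (degree P - i)) * a (n + degree P - i)))"

definition binom_transform :: "'a::comm_ring_1 \<Rightarrow> 'a \<Rightarrow> (nat \<Rightarrow> 'a) \<Rightarrow> nat \<Rightarrow> 'a" where
  "binom_transform h y a n = (\<Sum>i=0..n. of_nat (n choose i) * h ^ i * y ^ (n - i) * a i)"

end

theory Submission
  imports Defs
begin

definition ev :: "(nat \<Rightarrow> 'a::comm_ring_1) \<Rightarrow> 'a poly \<Rightarrow> 'a" where
  "ev a Q = (\<Sum>j\<le>degree Q. coeff Q j * a j)"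

lemma ev_bound: "degree Q \<le> N \<Longrightarrow> ev a Q = (\<Sum>j\<le>N. coeff Q j * a j)"
  unfolding ev_def
  by (rule sum.mono_neutral_left) (auto simp: coeff_eq_0)

lemma ev_add: "ev a (Q + R) = ev a Q + ev a R"
proof -
  let ?N = "max (degree Q) (degree R)"
  have "degree (Q+R) \<le> ?N" by (rule degree_add_le) auto
  then show ?thesis
    by (simp add: ev_bound[of _ ?N] sum.distrib distrib_right)
qed

lemma ev_0: "ev a 0 = 0" by (simp add: ev_def)

lemma ev_smult: "ev a (smult c Q) = c * ev a Q"
  by (subst ev_bound[OF degree_smult_le]) (simp add: ev_def sum_distrib_left mult.assoc)

lemma ev_sum: "finite A \<Longrightarrow> ev a (sum f A) = (\<Sum>i\<in>A. ev a (f i))"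
  by (induction A rule: finite_induct) (auto simp: ev_0 ev_add)

lemma ev_monom: "ev a (monom c i) = c * a i"
proof -
  have "ev a (monom c i) = (\<Sum>j\<le>i. (if i = j then c else 0) * a j)"
    by (subst ev_bound[OF degree_monom_le]) (simp add: coeff_monom)
  also have "\<dots> = c * a i" by (subst sum.remove[of _ i]) auto
  finally show ?thesis .
qed

lemma ev_shift: "ev (\<lambda>k. a (n+k)) Q = ev a (monom 1 n * Q)"
proof -
  have d: "degree (monom 1 n * Q) \<le> n + degree Q"
    by (rule order_trans[OF degree_mult_le]) (simp add: degree_monom_le)
  have "ev a (monom 1 n * Q) = (\<Sum>k\<le>n + degree Q. coeff (monom 1 n * Q) k * a k)"
    by (rule ev_bound[OF d])
  also have "\<dots> = (\<Sum>k\<in>{n..n + degree Q}. coeff (monom 1 n * Q) k * a k)"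
    by (rule sum.mono_neutral_right) (auto simp: coeff_monom_mult)
  also have "\<dots> = (\<Sum>j\<in>{0..degree Q}. coeff (monom 1 n * Q) (j+n) * a (j+n))"
    using sum.shift_bounds_cl_nat_ivl[of "\<lambda>k. coeff (monom 1 n * Q) k * a k" 0 n "degree Q"]
    by (simp add: add.commute[of n "degree Q"])
  also have "\<dots> = ev (\<lambda>k. a (n+k)) Q"
    unfolding ev_def atLeast0AtMost
    by (rule sum.cong) (simp_all add: coeff_monom_mult add.commute[of _ n])
  finally show ?thesis ..
qed

lemma ev_ideal:
  assumes "\<And>n. ev (\<lambda>k. a (n+k)) P = 0"
  shows "ev a (R * P) = 0"
proof -
  have "R * P = (\<Sum>i\<le>degree R. smult (coeff R i) (monom 1 i * P))"
    apply (subst (1) poly_as_sum_of_monoms[of R, symmetric])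
    by (simp add: sum_distrib_right smult_monom_mult)
  then show ?thesis
    by (simp add: ev_sum ev_smult ev_shift[symmetric] assms)
qed

lemma pcompose_as_sum: "pcompose Q r = (\<Sum>j\<le>degree Q. smult (coeff Q j) (r^j))"
proof -
  have m: "pcompose (monom c j) r = smult c (r^j)" for c j
  proof -
    have mm: "monom c j = smult c ([:0,1:]^j)" by (simp add: monom_altdef)
    have pw: "pcompose ([:0,1:]^j) r = r^j"
      by (induct j) (simp_all add: pcompose_mult pcompose_1 pcompose_pCons)
    then show ?thesis by (simp add: mm pcompose_smult)
  qed
  show ?thesis
    apply (subst (1) poly_as_sum_of_monoms[of Q, symmetric])
    by (simp add: pcompose_sum m)
qed

lemma binom_ev: "binom_transform (-1) p a n = ev a ([:p,-1:]^n)"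
proof -
  have d: "degree ([:p,-1:]^n) \<le> n"
    using degree_power_le[of "[:p,-1:]" n] by (simp add: degree_pCons_le)
  show ?thesis
    by (auto simp: ev_bound[OF d] binom_transform_def atLeast0AtMost coeff_linear_poly_power
       mult_ac intro!: sum.cong)
qed

lemma lin_rec_iff:
  "lin_rec_charpoly P a \<longleftrightarrow> lead_coeff P = 1 \<and> (\<forall>n. ev (\<lambda>k. a (n+k)) P = 0)"
proof -
  have key: "a (n + degree P) = (\<Sum>i=1..degree P. (- coeff P (degree P - i)) * a (n + degree P - i))
      \<longleftrightarrow> ev (\<lambda>k. a (n+k)) P = 0" if "lead_coeff P = 1" for n
  proof -
    let ?d = "degree P"
    have "(\<Sum>i=1..?d. (- coeff P (?d - i)) * a (n + ?d - i))
        = (\<Sum>i<?d. (- coeff P (?d - Suc i)) * a (n + ?d - Suc i))"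
      using sum.shift_bounds_cl_Suc_ivl[of "\<lambda>i. (- coeff P (?d - i)) * a (n + ?d - i)" 0 "?d - 1"]
      by (cases ?d) (auto simp: atLeast0AtMost lessThan_Suc_atMost)
    also have "\<dots> = (\<Sum>j<?d. (- coeff P j) * a (n + j))"
      using sum.nat_diff_reindex[of "\<lambda>j. (- coeff P j) * a (n + j)" ?d]
      by (simp add: Suc_diff_Suc)
    also have "\<dots> = - (\<Sum>j<?d. coeff P j * a (n + j))"
      by (simp add: sum_negf)
    finally have e: "(\<Sum>i=1..?d. (- coeff P (?d - i)) * a (n + ?d - i)) = - (\<Sum>j<?d. coeff P j * a (n + j))" .
    have "ev (\<lambda>k. a (n+k)) P = (\<Sum>j<?d. coeff P j * a (n + j)) + a (n + ?d)"
      using that by (simp add: ev_def lessThan_Suc_atMost[symmetric])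
    then show ?thesis using e by (auto simp: add_eq_0_iff add.commute)
  qed
  show ?thesis unfolding lin_rec_charpoly_def using key by blast
qed

theorem corollary13:
  fixes p q :: "'a::idom" and m :: nat and a :: "nat \<Rightarrow> 'a"
  assumes "m \<ge> 1"
    and "lin_rec_charpoly ([:q, - p, 1:] ^ m) a"
  shows "lin_rec_charpoly ([:q, - p, 1:] ^ m) (binom_transform (- 1) p a)"
proof -
  define P where "P = [:q, - p, 1:] ^ m"
  define r where "r = [:p, -1:]"
  have PP: "pcompose P r = P"
  proof -
    have "pcompose [:q, - p, 1:] [:p, -1:] = [:q, - p, 1:]"
    proof -
      have a: "pcompose [:q, - p, 1:] [:p, -1:] = [:q:] + [:p, -1:] * ([:-p:] + [:p, -1:])"
        by (simp add: pcompose_pCons)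
      have b: "[:p, -1:] * [:p, -1:] = [:p*p, -(2*p), 1:]"
        by (simp add: mult_pCons_left smult_add_left algebra_simps)
      show ?thesis unfolding a distrib_left b
        by (simp add: mult_pCons_left algebra_simps)
    qed
    then have "pcompose [:q, - p, 1:] r = [:q, - p, 1:]" by (simp only: r_def)
    moreover have "pcompose (x ^ k) r = (pcompose x r) ^ k" for x :: "'a poly" and k
      by (induct k) (simp_all add: pcompose_mult pcompose_1)
    ultimately show ?thesis by (simp add: P_def)
  qed
  have A: "lead_coeff P = 1" "\<And>n. ev (\<lambda>k. a (n+k)) P = 0"
    using assms(2) unfolding P_def[symmetric] lin_rec_iff by auto
  let ?b = "binom_transform (- 1) p a"
  have evb: "ev ?b Q = ev a (pcompose Q r)" for Q
  proof -
    have "ev ?b Q = (\<Sum>j\<le>degree Q. coeff Q j * ev a (r ^ j))"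
      unfolding ev_def[of ?b] by (simp only: binom_ev r_def)
    also have "\<dots> = ev a (pcompose Q r)"
      by (simp add: pcompose_as_sum[of Q r] ev_sum ev_smult)
    finally show ?thesis .
  qed
  have "ev (\<lambda>k. ?b (n+k)) P = 0" for n
  proof -
    have "ev (\<lambda>k. ?b (n+k)) P = ev a (pcompose (monom 1 n * P) r)"
      by (subst ev_shift) (rule evb)
    also have "pcompose (monom 1 n * P) r = r ^ n * P"
    proof -
      have "pcompose (monom 1 n) r = r ^ n"
        using pcompose_as_sum[of "monom (1::'a) n" r]
        by (simp add: degree_monom_eq coeff_monom) (subst sum.remove[of _ n], auto)
      then show ?thesis by (simp add: pcompose_mult PP)
    qed
    also have "ev a (r ^ n * P) = 0" by (rule ev_ideal[OF A(2)])
    finally show ?thesis .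
  qed
  then show ?thesis unfolding P_def[symmetric] lin_rec_iff using A(1) by auto
qed

end
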